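(* Let $k\ge 3$ and let $D$ be a digraph on $n$ vertices with $\delta^0(D)\ge\lceil (n+k)/2\rceil-1$. Let $S=(s_1,\dots,s_k)$ be a sequence of distinct vertices of $D$, let $C$ be a longest $S$-cycle in $D$, and suppose $C$ is not Hamiltonian. Let $H$ be the subdigraph of $D$ induced by $V(D)\setminus V(C)$. Then $H$ is Hamiltonian connected and $d^-_H(x)+d^+_H(y)\ge |H|+k-2$ for all (not necessarily distinct) vertices $x,y\in H$. Moreover, every digraph obtained from $H$ by deleting at most $2$ vertices is strongly connected, and $k\le |H|\le \lfloor (n-k)/2\rfloor$.
   Context: Digraphs have no loops and at most one edge in each direction between any two vertices; paths and cycles are directed. $\delta^0(D)=\min\{\delta^+(D),\delta^-(D)\}$. An $S$-cycle is a directed cycle in $D$ which encounters $s_1,\dots,s_k$ in this order. For $x\in H$, $d^+_H(x)$ and $d^-_H(x)$ denote the out- and indegree of $x$ within $H$. A digraph is strongly connected if for every ordered pair $x,y$ of vertices there is a directed $x$-$y$ path, and Hamiltonian connected if for every ordered pair of distinct vertices $x,y$ there is a directed Hamilton path from $x$ to $y$. *)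

theory Defs
  imports Complex_Main "HOL-Library.Sublist"
begin

text \<open>A digraph is a finite vertex set V with an edge relation E \<subseteq> V \<times> V without loops.
  Using a relation, there is at most one edge in each direction between two vertices.\<close>
definition digraph :: "'a set \<Rightarrow> ('a \<times> 'a) set \<Rightarrow> bool" where
  "digraph V E \<longleftrightarrow> finite V \<and> E \<subseteq> V \<times> V \<and> (\<forall>x. (x, x) \<notin> E)"

definition outdeg :: "'a set \<Rightarrow> ('a \<times> 'a) set \<Rightarrow> 'a \<Rightarrow> nat" where
  "outdeg V E x = card {y \<in> V. (x, y) \<in> E}"

definition indeg :: "'a set \<Rightarrow> ('a \<times> 'a) set \<Rightarrow> 'a \<Rightarrow> nat" where
  "indeg V E x = card {y \<in> V. (y, x) \<in> E}"

definition min_semidegree :: "'a set \<Rightarrow> ('a \<times> 'a) set \<Rightarrow> nat" where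
  "min_semidegree V E = min (Min (outdeg V E ` V)) (Min (indeg V E ` V))"

definition induced_edges :: "('a \<times> 'a) set \<Rightarrow> 'a set \<Rightarrow> ('a \<times> 'a) set" where
  "induced_edges E W = E \<inter> (W \<times> W)"

definition is_path :: "('a \<times> 'a) set \<Rightarrow> 'a list \<Rightarrow> bool" where
  "is_path E p \<longleftrightarrow> p \<noteq> [] \<and> distinct p \<and> (\<forall>i. Suc i < length p \<longrightarrow> (p ! i, p ! Suc i) \<in> E)"

definition is_cycle :: "('a \<times> 'a) set \<Rightarrow> 'a list \<Rightarrow> bool" where
  "is_cycle E c \<longleftrightarrow> length c \<ge> 2 \<and> distinct c \<and>
     (\<forall>i < length c. (c ! i, c ! ((i + 1) mod length c)) \<in> E)"

text \<open>An S-cycle: a cycle encountering s_1,\<dots>,s_k in this (cyclic) order.\<close>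
definition is_S_cycle :: "('a \<times> 'a) set \<Rightarrow> 'a list \<Rightarrow> 'a list \<Rightarrow> bool" where
  "is_S_cycle E S c \<longleftrightarrow> is_cycle E c \<and> (\<exists>j. subseq S (rotate j c))"

definition hamiltonian_connected :: "'a set \<Rightarrow> ('a \<times> 'a) set \<Rightarrow> bool" where
  "hamiltonian_connected V E \<longleftrightarrow>
     (\<forall>x\<in>V. \<forall>y\<in>V. x \<noteq> y \<longrightarrow>
        (\<exists>p. is_path E p \<and> set p = V \<and> hd p = x \<and> last p = y))"

definition strongly_connected :: "'a set \<Rightarrow> ('a \<times> 'a) set \<Rightarrow> bool" where
  "strongly_connected V E \<longleftrightarrow>
     (\<forall>x\<in>V. \<forall>y\<in>V. \<exists>p. is_path E p \<and> set p \<subseteq> V \<and> hd p = x \<and> last p = y)"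

end

theory Submission
  imports Defs
begin
definition pedges :: "'a list \<Rightarrow> ('a \<times> 'a) set" where
  "pedges xs = set (zip xs (tl xs))"
definition cedges :: "'a list \<Rightarrow> ('a \<times> 'a) set" where
  "cedges xs = set (zip xs (rotate1 xs))"
definition cyc :: "('a \<times> 'a) set \<Rightarrow> 'a list \<Rightarrow> bool" where
  "cyc E c \<longleftrightarrow> 2 \<le> length c \<and> distinct c \<and> cedges c \<subseteq> E"
definition ins :: "('a \<times> 'a) set \<Rightarrow> 'a list \<Rightarrow> 'a \<Rightarrow> bool" where
  "ins E c v \<longleftrightarrow> (\<exists>(a,b)\<in>cedges c. (a,v)\<in>E \<and> (v,b)\<in>E)"

lemma pedges_Nil[simp]: "pedges [] = {}" and pedges_single[simp]: "pedges [x] = {}"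
  by (auto simp: pedges_def)
lemma pedges_Cons2[simp]: "pedges (x#y#t) = insert (x,y) (pedges (y#t))"
  by (auto simp: pedges_def)
lemma pedges_Cons: "ys \<noteq> [] \<Longrightarrow> pedges (x#ys) = insert (x, hd ys) (pedges ys)"
  by (cases ys) auto
lemma pedges_append: "xs \<noteq> [] \<Longrightarrow> ys \<noteq> [] \<Longrightarrow>
   pedges (xs@ys) = pedges xs \<union> pedges ys \<union> {(last xs, hd ys)}"
proof (induction xs)
  case Nil then show ?case by simp
next
  case (Cons a xs)
  show ?case
  proof (cases "xs = []")
    case True then show ?thesis using Cons by (simp add: pedges_Cons)
  next
    case False
    then show ?thesis using Cons by (auto simp: pedges_Cons)
  qed
qed

lemma zip_snoc_aux: "zip (x#ys) (ys @ [z]) = zip (x#ys) ys @ [(last (x#ys), z)]"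
  by (induction ys arbitrary: x) auto

lemma cedges_eq: "xs \<noteq> [] \<Longrightarrow> cedges xs = insert (last xs, hd xs) (pedges xs)"
  by (cases xs) (auto simp: cedges_def pedges_def zip_snoc_aux)

lemma pedges_sub_cedges: "pedges xs \<subseteq> cedges xs"
  by (cases "xs = []") (auto simp: cedges_eq)

lemma zip_rotate1: "length xs = length ys \<Longrightarrow> zip (rotate1 xs) (rotate1 ys) = rotate1 (zip xs ys)"
  by (cases xs; cases ys) auto

lemma cedges_rotate1[simp]: "cedges (rotate1 xs) = cedges xs"
  unfolding cedges_def by (simp add: zip_rotate1)

lemma cedges_rotate[simp]: "cedges (rotate n xs) = cedges xs"
  by (induction n) (auto simp: rotate_def)

lemma in_pedges_iff: "(a,b) \<in> pedges p \<longleftrightarrow> (\<exists>i. Suc i < length p \<and> a = p!i \<and> b = p!Suc i)"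
  unfolding pedges_def set_zip by (auto simp: nth_tl less_diff_conv)

lemma is_path_iff: "is_path E p \<longleftrightarrow> p \<noteq> [] \<and> distinct p \<and> pedges p \<subseteq> E"
  unfolding is_path_def subset_iff by (auto simp: in_pedges_iff)

lemma in_cedges_iff: "(a,b) \<in> cedges c \<longleftrightarrow> (\<exists>i<length c. a = c!i \<and> b = c!((i+1) mod length c))"
  unfolding cedges_def set_zip by (auto simp: nth_rotate1)

lemma is_cycle_iff: "is_cycle E c \<longleftrightarrow> cyc E c"
  unfolding is_cycle_def cyc_def subset_iff by (auto simp: in_cedges_iff)

lemma cyc_rotate[simp]: "cyc E (rotate n c) \<longleftrightarrow> cyc E c"
  by (simp add: cyc_def)

lemma ins_rotate[simp]: "ins E (rotate n c) v \<longleftrightarrow> ins E c v"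
  by (simp add: ins_def)

lemma cedges_rot_to: assumes "(a,b) \<in> cedges c"
  shows "\<exists>j. last (rotate j c) = a \<and> hd (rotate j c) = b"
proof -
  obtain i where i: "i < length c" "a = c!i" "b = c!((i+1) mod length c)"
    using assms unfolding in_cedges_iff by blast
  have ne: "c \<noteq> []" using i by auto
  have h: "hd (rotate (Suc i) c) = b" unfolding i(3) Suc_eq_plus1[symmetric]
    by (rule hd_rotate_conv_nth[OF ne])
  have l: "length c - 1 < length c" using ne by simp
  have lr: "length (rotate (Suc i) c) = length c" by (rule length_rotate)
  have ne2: "rotate (Suc i) c \<noteq> []" using ne lr by (metis length_0_conv)
  have "last (rotate (Suc i) c) = rotate (Suc i) c ! (length (rotate (Suc i) c) - 1)"
    by (rule last_conv_nth[OF ne2])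
  also have "\<dots> = rotate (Suc i) c ! (length c - 1)" by (simp only: lr)
  also have "\<dots> = c ! ((Suc i + (length c - 1)) mod length c)"
    by (rule nth_rotate[OF l])
  also have "Suc i + (length c - 1) = i + length c" using ne by (cases c) auto
  also have "(i + length c) mod length c = i" using i(1) by simp
  finally have "last (rotate (Suc i) c) = a" unfolding i(2) .
  then show ?thesis using h by blast
qed

lemma rot_to_hd: assumes "v \<in> set c" shows "\<exists>j. hd (rotate j c) = v"
proof -
  obtain i where i: "i < length c" "c!i = v" using assms by (auto simp: in_set_conv_nth)
  have ne: "c \<noteq> []" using assms by auto
  have "hd (rotate i c) = c ! (i mod length c)" by (rule hd_rotate_conv_nth[OF ne])
  then show ?thesis using i by auto
qed

lemma pedges_take: "pedges (take n xs) \<subseteq> pedges xs"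
proof (rule subsetI)
  fix e assume e: "e \<in> pedges (take n xs)"
  obtain a b where ab: "e = (a,b)" by fastforce
  obtain i where i: "Suc i < length (take n xs)" "a = take n xs ! i" "b = take n xs ! Suc i"
    using e unfolding ab in_pedges_iff by blast
  have "Suc i < length xs" "a = xs ! i" "b = xs ! Suc i" using i by auto
  then show "e \<in> pedges xs" unfolding ab in_pedges_iff by blast
qed
lemma pedges_drop: "pedges (drop n xs) \<subseteq> pedges xs"
proof (rule subsetI)
  fix e assume e: "e \<in> pedges (drop n xs)"
  obtain a b where ab: "e = (a,b)" by fastforce
  obtain i where i: "Suc i < length (drop n xs)" "a = drop n xs ! i" "b = drop n xs ! Suc i"
    using e unfolding ab in_pedges_iff by blast
  have "Suc (n+i) < length xs" "a = xs ! (n+i)" "b = xs ! Suc (n+i)" using i by auto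
  then show "e \<in> pedges xs" unfolding ab in_pedges_iff by blast
qed

lemma multi_ins:
  "cyc E c \<Longrightarrow> distinct q \<Longrightarrow> pedges q \<subseteq> E \<Longrightarrow> set q \<inter> set c = {} \<Longrightarrow>
   \<forall>v\<in>set q. ins E c v \<Longrightarrow> \<exists>c'. cyc E c' \<and> set c' = set c \<union> set q"
proof (induction "length q" arbitrary: c q rule: less_induct)
  case less
  show ?case
  proof (cases q)
    case Nil then show ?thesis using less by auto
  next
    case (Cons v1 qt)
    have "ins E c v1" using less Cons by auto
    then obtain a b where ab: "(a,b) \<in> cedges c" "(a,v1)\<in>E" "(v1,b)\<in>E"
      unfolding ins_def by auto
    obtain j where j: "last (rotate j c) = a" "hd (rotate j c) = b"
      using cedges_rot_to[OF ab(1)] by auto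
    define c0 where "c0 = rotate j c"
    have c0: "cyc E c0" "set c0 = set c" "cedges c0 = cedges c" "last c0 = a" "hd c0 = b"
      using less(2) j by (auto simp: c0_def)
    have c0ne: "c0 \<noteq> []" using c0(1) by (auto simp: cyc_def)
    define M where "M = {i. i < length q \<and> (q!i, b) \<in> E}"
    have M0: "0 \<in> M" using Cons ab by (auto simp: M_def)
    have Mfin: "finite M" by (auto simp: M_def)
    define l where "l = Suc (Max M)"
    have MM: "Max M \<in> M" using Max_in[OF Mfin] M0 by auto
    have lq: "l \<le> length q" using MM by (simp add: l_def M_def)
    have l1: "1 \<le> l" by (simp add: l_def)
    have lastb: "(q!(l-1), b) \<in> E" using MM by (simp add: l_def M_def)
    define q1 where "q1 = take l q"
    define q2 where "q2 = drop l q"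
    have q12: "q = q1 @ q2" by (simp add: q1_def q2_def)
    have q1ne: "q1 \<noteq> []" using l1 Cons by (auto simp: q1_def)
    have hdq1: "hd q1 = v1" using l1 Cons by (auto simp: q1_def)
    have lastq1: "last q1 = q!(l-1)" using l1 lq q1ne
      by (auto simp: q1_def last_conv_nth)
    define c2 where "c2 = c0 @ q1"
    have pe: "pedges c2 = pedges c0 \<union> pedges q1 \<union> {(last c0, hd q1)}"
      unfolding c2_def by (rule pedges_append[OF c0ne q1ne])
    have ce2: "cedges c2 = insert (last q1, hd c0) (pedges c2)"
      using cedges_eq[of c2] c0ne q1ne by (simp add: c2_def)
    have "pedges c0 \<subseteq> E" using c0(1) pedges_sub_cedges[of c0] by (auto simp: cyc_def)
    moreover have "pedges q1 \<subseteq> E" using less(4) pedges_take[of l q] by (auto simp: q1_def)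
    ultimately have "cedges c2 \<subseteq> E" using ce2 pe c0 ab hdq1 lastq1 lastb by auto
    moreover have "distinct c2" using c0(1) less(3,5) q12 c0(2)
      by (auto simp: c2_def cyc_def)
    moreover have "2 \<le> length c2" using c0(1) by (auto simp: c2_def cyc_def)
    ultimately have cyc2: "cyc E c2" by (simp add: cyc_def)
    have ins2: "\<forall>v\<in>set q2. ins E c2 v"
    proof
      fix v assume v: "v \<in> set q2"
      then obtain s where s: "l \<le> s" "s < length q" "q!s = v"
        by (auto simp: q2_def in_set_conv_nth) (metis add.commute le_add2 less_diff_conv)
      have "ins E c v" using less(6) s by auto
      then obtain a' b' where ab': "(a',b') \<in> cedges c" "(a',v)\<in>E" "(v,b')\<in>E"
        unfolding ins_def by auto
      have "(a',b') \<noteq> (last c0, hd c0)"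
      proof
        assume "(a',b') = (last c0, hd c0)"
        then have "b' = b" using c0 by simp
        then have "s \<in> M" using s ab' by (auto simp: M_def)
        then have "s \<le> Max M" using Mfin by simp
        then show False using s by (simp add: l_def)
      qed
      then have "(a',b') \<in> pedges c0" using ab'(1) c0(3) cedges_eq[OF c0ne] by auto
      then have "(a',b') \<in> cedges c2" using pe pedges_sub_cedges[of c2] by auto
      then show "ins E c2 v" using ab' by (auto simp: ins_def)
    qed
    have lt: "length q2 < length q" using l1 lq by (simp add: q2_def)
    have "distinct q2" using less(3) by (simp add: q2_def)
    moreover have "pedges q2 \<subseteq> E" using less(4) pedges_drop[of l q] by (auto simp: q2_def)
    moreover have "set q2 \<inter> set c2 = {}" using less(3,5) q12 c0(2)
      by (auto simp: c2_def)
    ultimately obtain c' where "cyc E c'" "set c' = set c2 \<union> set q2"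
      using less(1)[OF lt cyc2] ins2 by blast
    moreover have "set c2 \<union> set q2 = set c \<union> set q" using q12 c0(2) by (auto simp: c2_def)
    ultimately show ?thesis by auto
  qed
qed

lemma card_insert_filter: "finite B \<Longrightarrow> a \<notin> B \<Longrightarrow>
  card {v \<in> insert a B. P v} = of_bool (P a) + card {v\<in>B. P v}"
proof -
  assume "finite B" "a \<notin> B"
  then show ?thesis
    by (cases "P a") (auto simp: insert_compr[symmetric] Collect_conj_eq intro!: card_insert_disjoint)
qed

lemma count_path:
  "distinct A \<Longrightarrow> A \<noteq> [] \<Longrightarrow> \<forall>(a,b)\<in>pedges A. \<not>((a,x)\<in>E \<and> (y,b)\<in>E) \<Longrightarrow>
   card {v\<in>set A. (v,x)\<in>E} + card {v\<in>set A. (y,v)\<in>E} + 1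
     \<le> length A + of_bool ((y, hd A)\<in>E) + of_bool ((last A, x) \<in> E)"
proof (induction A)
  case Nil then show ?case by simp
next
  case (Cons a A')
  show ?case
  proof (cases "A' = []")
    case True
    then show ?thesis by (auto simp: Collect_conj_eq)
  next
    case False
    have IH: "card {v\<in>set A'. (v,x)\<in>E} + card {v\<in>set A'. (y,v)\<in>E} + 1
     \<le> length A' + of_bool ((y, hd A')\<in>E) + of_bool ((last A', x) \<in> E)"
      using Cons False by (auto simp: pedges_Cons)
    have nin: "\<not>((a,x)\<in>E \<and> (y,hd A')\<in>E)" using Cons.prems(3) False by (auto simp: pedges_Cons)
    have a: "a \<notin> set A'" using Cons by simp
    have e1: "card {v\<in>set (a#A'). (v,x)\<in>E} = of_bool ((a,x)\<in>E) + card {v\<in>set A'. (v,x)\<in>E}"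
      using card_insert_filter[OF _ a] by simp
    have e2: "card {v\<in>set (a#A'). (y,v)\<in>E} = of_bool ((y,a)\<in>E) + card {v\<in>set A'. (y,v)\<in>E}"
      using card_insert_filter[OF _ a] by simp
    have hl: "hd (a#A') = a" "last (a#A') = last A'" "length (a#A') = Suc (length A')" using False by auto
    show ?thesis using IH nin unfolding e1 e2 hl
      by (cases "(a,x)\<in>E"; cases "(y,a)\<in>E"; cases "(y,hd A')\<in>E"; cases "(last A',x)\<in>E") simp_all
  qed
qed

lemma count_path2:
  assumes "distinct A" "\<forall>(a,b)\<in>pedges A. \<not>((a,x)\<in>E \<and> (y,b)\<in>E)"
  shows "card {v\<in>set A. (v,x)\<in>E} + card {v\<in>set A. (y,v)\<in>E} \<le> length A + 1"
proof (cases "A = []")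
  case True then show ?thesis by simp
next
  case False
  show ?thesis using count_path[OF assms(1) False assms(2)]
    by (cases "(y, hd A)\<in>E"; cases "(last A, x)\<in>E") simp_all
qed

lemma count_cycle:
  assumes "distinct A" "\<forall>(a,b)\<in>cedges A. \<not>((a,x)\<in>E \<and> (y,b)\<in>E)"
  shows "card {v\<in>set A. (v,x)\<in>E} + card {v\<in>set A. (y,v)\<in>E} \<le> length A"
proof (cases "A = []")
  case True then show ?thesis by simp
next
  case False
  have h1: "\<forall>(a,b)\<in>pedges A. \<not>((a,x)\<in>E \<and> (y,b)\<in>E)" using assms(2) pedges_sub_cedges[of A] by auto
  have "\<not>((last A,x)\<in>E \<and> (y,hd A)\<in>E)" using assms(2) cedges_eq[OF False] by auto
  then show ?thesis using count_path[OF assms(1) False h1]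
    by (cases "(y, hd A)\<in>E"; cases "(last A, x)\<in>E") simp_all
qed

lemma rt_path:
  assumes "(x,y) \<in> (induced_edges E W)\<^sup>*" "x \<in> W"
  shows "\<exists>p. is_path E p \<and> set p \<subseteq> W \<and> hd p = x \<and> last p = y"
  using assms(1)
proof (induction rule: rtrancl_induct)
  case base then show ?case using assms(2) by (intro exI[of _ "[x]"]) (auto simp: is_path_iff)
next
  case (step y z)
  then obtain p where p: "is_path E p" "set p \<subseteq> W" "hd p = x" "last p = y" by blast
  have z: "z \<in> W" "(y,z) \<in> E" using step(2) by (auto simp: induced_edges_def)
  show ?case
  proof (cases "z \<in> set p")
    case True
    then obtain i where i: "i < length p" "p!i = z" by (auto simp: in_set_conv_nth)
    let ?p = "take (Suc i) p"
    have "is_path E ?p" using p(1) pedges_take[of "Suc i" p] by (auto simp: is_path_iff)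
    moreover have "last ?p = z" using i by (simp add: take_Suc_conv_app_nth)
    moreover have "hd ?p = x" using p i by (cases p) auto
    moreover have "set ?p \<subseteq> W" using p(2) set_take_subset[of "Suc i" p] by blast
    ultimately show ?thesis by blast
  next
    case False
    have pne: "p \<noteq> []" using p by (simp add: is_path_iff)
    have "is_path E (p @ [z])" using p(1) p(4) False z pedges_append[OF pne, of "[z]"]
      by (auto simp: is_path_iff)
    moreover have "set (p@[z]) \<subseteq> W" using p z by auto
    moreover have "hd (p@[z]) = x" using p pne by simp
    ultimately show ?thesis by (intro exI[of _ "p@[z]"]) auto
  qed
qed

lemma path_rt:
  "pedges p \<subseteq> E \<Longrightarrow> set p \<subseteq> W \<Longrightarrow> p \<noteq> [] \<Longrightarrow> (hd p, last p) \<in> (induced_edges E W)\<^sup>*"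
proof (induction p)
  case Nil then show ?case by simp
next
  case (Cons a p)
  show ?case
  proof (cases "p = []")
    case True then show ?thesis by simp
  next
    case False
    have "(a, hd p) \<in> induced_edges E W" using Cons False
      by (auto simp: pedges_Cons induced_edges_def)
    moreover have "(hd p, last p) \<in> (induced_edges E W)\<^sup>*" using Cons False by (auto simp: pedges_Cons)
    ultimately show ?thesis using False by simp
  qed
qed

lemma card_filter_sum: "finite A \<Longrightarrow> card {x\<in>A. P x} = (\<Sum>x\<in>A. of_bool (P x))"
proof -
  assume "finite A"
  have "{x\<in>A. P x} = A \<inter> {x. P x}" by blast
  moreover have "(\<Sum>x\<in>A. of_bool (P x)) = (of_nat (card (A \<inter> {x. P x})) :: nat)"
    by (rule sum_of_bool_eq[OF \<open>finite A\<close> \<open>finite A\<close>])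
  ultimately show ?thesis by simp
qed

lemma sc_lemma:
  fixes W :: "'a set" and F :: "('a \<times> 'a) set"
  assumes fin: "finite W" and F: "F \<subseteq> W \<times> W" and nl: "\<forall>x. (x,x) \<notin> F"
    and deg: "\<forall>u\<in>W. \<forall>v\<in>W. (u,v) \<in> F\<^sup>* \<longrightarrow> card W \<le> indeg W F u + outdeg W F v + 1"
  shows "\<forall>x\<in>W. \<forall>y\<in>W. (x,y) \<in> F\<^sup>*"
proof -
  define co where "co u = {a\<in>W. (a,u)\<in>F\<^sup>*}" for u
  define re where "re v = {b\<in>W. (v,b)\<in>F\<^sup>*}" for v
  have cofin: "finite (co u)" "co u \<subseteq> W" for u using fin by (auto simp: co_def)
  have refin: "finite (re u)" "re u \<subseteq> W" for u using fin by (auto simp: re_def)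
  have in_le: "indeg W F u + 1 \<le> card (co u)" if "u \<in> W" for u
  proof -
    have sub: "insert u {a\<in>W. (a,u)\<in>F} \<subseteq> co u" using that by (auto simp: co_def)
    have nin: "u \<notin> {a\<in>W. (a,u)\<in>F}" using nl by auto
    have S: "finite {a\<in>W. (a,u)\<in>F}" using fin by auto
    have c1: "card (insert u {a\<in>W. (a,u)\<in>F}) = Suc (card {a\<in>W. (a,u)\<in>F})"
      by (rule card_insert_disjoint[OF S nin])
    have c2: "card (insert u {a\<in>W. (a,u)\<in>F}) \<le> card (co u)" by (rule card_mono[OF cofin(1) sub])
    show ?thesis using c1 c2 by (simp add: indeg_def)
  qed
  have out_le: "outdeg W F u + 1 \<le> card (re u)" if "u \<in> W" for u
  proof -
    have sub: "insert u {a\<in>W. (u,a)\<in>F} \<subseteq> re u" using that by (auto simp: re_def)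
    have nin: "u \<notin> {a\<in>W. (u,a)\<in>F}" using nl by auto
    have S: "finite {a\<in>W. (u,a)\<in>F}" using fin by auto
    have c1: "card (insert u {a\<in>W. (u,a)\<in>F}) = Suc (card {a\<in>W. (u,a)\<in>F})"
      by (rule card_insert_disjoint[OF S nin])
    have c2: "card (insert u {a\<in>W. (u,a)\<in>F}) \<le> card (re u)" by (rule card_mono[OF refin(1) sub])
    show ?thesis using c1 c2 by (simp add: outdeg_def)
  qed
  have key: "card W + 1 \<le> card (co u) + card (re v)" if "u\<in>W" "v\<in>W" "(u,v)\<in>F\<^sup>*" for u v
  proof -
    have "card W \<le> indeg W F u + outdeg W F v + 1" using deg[rule_format, OF that] .
    then show ?thesis using in_le[OF that(1)] out_le[OF that(2)] by linarith
  qed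
  have dis: "card (re x) + card (co y) \<le> card W" if "(x,y) \<notin> F\<^sup>*" for x y
  proof -
    have "re x \<inter> co y = {}"
    proof (rule ccontr)
      assume "re x \<inter> co y \<noteq> {}"
      then obtain z where "(x,z)\<in>F\<^sup>*" "(z,y)\<in>F\<^sup>*" by (auto simp: re_def co_def)
      then have "(x,y)\<in>F\<^sup>*" by (rule rtrancl_trans)
      with that show False by simp
    qed
    then have "card (re x \<union> co y) = card (re x) + card (co y)"
      using refin cofin by (simp add: card_Un_disjoint)
    moreover have "card (re x \<union> co y) \<le> card W"
      using refin cofin fin by (intro card_mono) auto
    ultimately show ?thesis by simp
  qed
  show ?thesis
  proof (intro ballI, rule ccontr)
    fix x y assume xy: "x \<in> W" "y \<in> W" "(x,y) \<notin> F\<^sup>*"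
    show False
    proof (cases "(y,x) \<in> F\<^sup>*")
      case True
      then show False using key[OF xy(2,1) True] dis[OF xy(3)] by simp
    next
      case False
      then show False using key[OF xy(1,1) rtrancl_refl] key[OF xy(2,2) rtrancl_refl] dis[OF xy(3)] dis[OF False] by simp
    qed
  qed
qed

lemma exit_lemma:
  "(a,b) \<in> F\<^sup>* \<Longrightarrow> a \<in> S \<Longrightarrow> b \<notin> S \<Longrightarrow> \<exists>u w. u \<in> S \<and> w \<notin> S \<and> (u,w) \<in> F"
proof (induction rule: rtrancl_induct)
  case base then show ?case by simp
next
  case (step y z)
  then show ?case by (cases "y \<in> S") auto
qed

lemma enter_lemma:
  "(a,b) \<in> F\<^sup>* \<Longrightarrow> a \<notin> S \<Longrightarrow> b \<in> S \<Longrightarrow>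
   \<exists>w v. (a,w) \<in> (F \<inter> (-S) \<times> (-S))\<^sup>* \<and> w \<notin> S \<and> v \<in> S \<and> (w,v) \<in> F"
proof (induction rule: converse_rtrancl_induct)
  case base then show ?case by simp
next
  case (step a a')
  show ?case
  proof (cases "a' \<in> S")
    case True
    have "(a,a) \<in> (F \<inter> (-S) \<times> (-S))\<^sup>*" by simp
    then show ?thesis using step True by blast
  next
    case False
    obtain w v where wv: "(a',w) \<in> (F \<inter> (-S) \<times> (-S))\<^sup>*" "w \<notin> S" "v \<in> S" "(w,v) \<in> F"
      using step.IH[OF False step.prems(2)] by blast
    have "(a,a') \<in> F \<inter> (-S) \<times> (-S)" using step False by auto
    then have "(a,w) \<in> (F \<inter> (-S) \<times> (-S))\<^sup>*" using wv(1) by (rule converse_rtrancl_into_rtrancl)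
    then show ?thesis using wv by blast
  qed
qed

lemma cyc_set_sub: "cyc F c \<Longrightarrow> F \<subseteq> V \<times> V \<Longrightarrow> set c \<subseteq> V"
proof
  fix v assume c: "cyc F c" "F \<subseteq> V \<times> V" and v: "v \<in> set c"
  then obtain i where i: "i < length c" "c!i = v" by (auto simp: in_set_conv_nth)
  have "(c!i, c!((i+1) mod length c)) \<in> cedges c" using i(1) unfolding in_cedges_iff by blast
  then show "v \<in> V" using c i by (auto simp: cyc_def)
qed

lemma cyc_len_le: "cyc F c \<Longrightarrow> F \<subseteq> V \<times> V \<Longrightarrow> finite V \<Longrightarrow> length c \<le> card V"
proof -
  assume a: "cyc F c" "F \<subseteq> V \<times> V" "finite V"
  have "set c \<subseteq> V" by (rule cyc_set_sub[OF a(1,2)])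
  then have "card (set c) \<le> card V" by (rule card_mono[OF a(3)])
  then show ?thesis using a(1) by (simp add: cyc_def distinct_card)
qed

lemma longest_ex:
  assumes "cyc F c0" "F \<subseteq> V \<times> V" "finite V"
  shows "\<exists>C. cyc F C \<and> (\<forall>C'. cyc F C' \<longrightarrow> length C' \<le> length C)"
proof -
  define L where "L = {length c | c. cyc F c}"
  have "L \<subseteq> {..card V}" using cyc_len_le[OF _ assms(2,3)] by (auto simp: L_def)
  then have fin: "finite L" by (rule finite_subset) simp
  have "length c0 \<in> L" using assms(1) by (auto simp: L_def)
  then have "Max L \<in> L" using fin Max_in by blast
  then obtain C where C: "cyc F C" "length C = Max L" by (auto simp: L_def)
  have "length C' \<le> length C" if "cyc F C'" for C'
  proof -
    have "length C' \<in> L" using that by (auto simp: L_def)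
    then show ?thesis using C(2) Max_ge[OF fin] by simp
  qed
  then show ?thesis using C by blast
qed

lemma longest_noins:
  assumes C: "cyc F C" and lo: "\<forall>C'. cyc F C' \<longrightarrow> length C' \<le> length C"
    and z: "z \<notin> set C"
  shows "\<not> ins F C z"
proof
  assume "ins F C z"
  then obtain c' where "cyc F c'" "set c' = set C \<union> set [z]"
    using multi_ins[OF C, of "[z]"] z by auto
  then have "length c' = card (insert z (set C))" by (simp add: cyc_def distinct_card[symmetric])
  also have "\<dots> = Suc (card (set C))" using z by simp
  also have "\<dots> = Suc (length C)" using C by (simp add: cyc_def distinct_card)
  finally have "length c' = length C + 1" by simp
  then show False using lo \<open>cyc F c'\<close> by fastforce
qed

lemma is_path_drop: "is_path F Y \<Longrightarrow> n < length Y \<Longrightarrow> is_path F (drop n Y)"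
  using pedges_drop[of n Y] by (auto simp: is_path_iff)
lemma is_path_take: "is_path F Y \<Longrightarrow> 0 < n \<Longrightarrow> is_path F (take n Y)"
  using pedges_take[of n Y] by (auto simp: is_path_iff)

lemma sum_le_2: "finite S \<Longrightarrow> (\<And>v. v \<in> S \<Longrightarrow> f v \<le> (2::nat)) \<Longrightarrow> sum f S \<le> 2 * card S"
  using sum_bounded_above[of S f 2] by (simp add: mult.commute)

lemma sum_le_2_minus: "finite S \<Longrightarrow> u \<in> S \<Longrightarrow> f u = 0 \<Longrightarrow> (\<And>v. v \<in> S \<Longrightarrow> f v \<le> (2::nat))
   \<Longrightarrow> sum f S + 2 \<le> 2 * card S"
proof -
  assume a: "finite S" "u \<in> S" "f u = 0" "\<And>v. v \<in> S \<Longrightarrow> f v \<le> (2::nat)"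
  have "sum f S = f u + sum f (S - {u})" using a(1,2) by (rule sum.remove)
  moreover have "sum f (S - {u}) \<le> 2 * card (S - {u})"
    by (rule sum_le_2) (use a in auto)
  moreover have "card (S - {u}) + 1 = card S" using a(1,2)
    by (simp add: card_Diff_singleton) (metis Suc_pred card_gt_0_iff empty_iff)
  ultimately show ?thesis using a(3) by linarith
qed

theorem ham_cycle:
  fixes V :: "'a set" and F :: "('a \<times> 'a) set"
  assumes fin: "finite V" and F: "F \<subseteq> V \<times> V" and nl: "\<forall>x. (x,x) \<notin> F" and two: "2 \<le> card V"
    and deg: "\<forall>u\<in>V. \<forall>v\<in>V. card V \<le> indeg V F u + outdeg V F v"
  shows "\<exists>c. cyc F c \<and> set c = V"
proof -
  have strong: "\<forall>x\<in>V. \<forall>y\<in>V. (x,y) \<in> F\<^sup>*"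
  proof (rule sc_lemma[OF fin F nl], intro ballI impI)
    fix u v assume "u \<in> V" "v \<in> V"
    then have "card V \<le> indeg V F u + outdeg V F v" using deg by blast
    then show "card V \<le> indeg V F u + outdeg V F v + 1" by simp
  qed
  have Vne: "V \<noteq> {}" using two by auto
  then obtain x where x: "x \<in> V" by blast
  define Ix where "Ix = {a\<in>V. (a,x)\<in>F}"
  define Ox where "Ox = {a\<in>V. (x,a)\<in>F}"
  have IxO: "Ix \<union> Ox \<subseteq> V - {x}" using nl by (auto simp: Ix_def Ox_def)
  have "card V \<le> card Ix + card Ox" using deg x by (auto simp: Ix_def Ox_def indeg_def outdeg_def)
  moreover have "card (V - {x}) < card V" using fin x by (meson card_Diff1_less)
  ultimately have "Ix \<inter> Ox \<noteq> {}"
  proof -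
    assume a: "card V \<le> card Ix + card Ox" "card (V - {x}) < card V"
    show "Ix \<inter> Ox \<noteq> {}"
    proof
      assume "Ix \<inter> Ox = {}"
      then have "card (Ix \<union> Ox) = card Ix + card Ox" using fin
        by (intro card_Un_disjoint) (auto simp: Ix_def Ox_def)
      moreover have "card (Ix \<union> Ox) \<le> card (V - {x})" using IxO fin by (intro card_mono) auto
      ultimately show False using a by linarith
    qed
  qed
  then obtain z where z: "(z,x) \<in> F" "(x,z) \<in> F" by (auto simp: Ix_def Ox_def)
  have zx: "z \<noteq> x" using z nl by auto
  have "cyc F [x,z]" using z zx by (simp add: cyc_def cedges_eq)
  then obtain C where C: "cyc F C" and lo: "\<forall>C'. cyc F C' \<longrightarrow> length C' \<le> length C"
    using longest_ex[OF _ F fin] by blast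
  show ?thesis
  proof (rule ccontr)
    assume notham: "\<not> (\<exists>c. cyc F c \<and> set c = V)"
    have CV: "set C \<subseteq> V" by (rule cyc_set_sub[OF C F])
    have CneV: "set C \<noteq> V" using notham C by blast
    define R where "R = V - set C"
    have Rne: "R \<noteq> {}" using CV CneV by (auto simp: R_def)
    have Cne: "C \<noteq> []" using C by (auto simp: cyc_def)

    obtain r where r: "r \<in> R" using Rne by blast
    define c0 where "c0 = hd C"
    have c0: "c0 \<in> set C" using Cne by (simp add: c0_def)
    have "(c0, r) \<in> F\<^sup>*" using strong c0 CV r by (auto simp: R_def)
    then obtain u0 w where uw: "u0 \<in> set C" "w \<notin> set C" "(u0,w) \<in> F"
      using exit_lemma[of c0 r F "set C"] c0 r by (auto simp: R_def)
    have wV: "w \<in> V" using uw F by auto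
    have "(w, c0) \<in> F\<^sup>*" using strong c0 CV wV by auto
    then obtain w' v0 where wv: "(w,w') \<in> (F \<inter> (-set C) \<times> (-set C))\<^sup>*" "w' \<notin> set C" "v0 \<in> set C" "(w',v0) \<in> F"
      using enter_lemma[of w c0 F "set C"] uw c0 by blast
    have ind: "F \<inter> (-set C) \<times> (-set C) = induced_edges F R" using F by (auto simp: induced_edges_def R_def)
    have wR: "w \<in> R" using wV uw by (simp add: R_def)
    obtain Y0 where Y0: "is_path F Y0" "set Y0 \<subseteq> R" "hd Y0 = w" "last Y0 = w'"
      using rt_path[of w w' F R] wv(1) wR unfolding ind by blast
    obtain j0 where j0: "hd (rotate j0 C) = v0" using rot_to_hd[OF wv(3)] by blast
    define C1 where "C1 = rotate j0 C"
    have u0C1: "u0 \<in> set C1" using uw by (simp add: C1_def)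
    then obtain i where i: "i < length C1" "C1!i = u0" by (auto simp: in_set_conv_nth)
    define A0 where "A0 = take (Suc i) C1"
    define G0 where "G0 = drop (Suc i) C1"
    have A0ne: "A0 \<noteq> []" using i by (auto simp: A0_def)
    have lastA0: "last A0 = u0" using i by (simp add: A0_def take_Suc_conv_app_nth)
    have hdA0: "hd A0 = v0" using i j0 by (cases C1) (auto simp: A0_def C1_def)
    define bp where "bp A G Y \<longleftrightarrow> (\<exists>j. rotate j C = A @ G) \<and> A \<noteq> [] \<and> is_path F Y \<and> set Y \<subseteq> R
        \<and> (last A, hd Y) \<in> F \<and> (last Y, hd A) \<in> F" for A G Y
    have "bp A0 G0 Y0" unfolding bp_def
      using A0ne lastA0 hdA0 Y0 uw(3) wv(4) by (auto simp: A0_def G0_def C1_def)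
    then obtain AGY where AGY: "(\<lambda>(A,G,Y). bp A G Y) AGY"
       and minAGY: "\<forall>t. (\<lambda>(A,G,Y). bp A G Y) t \<longrightarrow> (\<lambda>(A,G,Y). length G) AGY \<le> (\<lambda>(A,G,Y). length G) t"
      using ex_has_least_nat[of "\<lambda>(A,G,Y). bp A G Y" "(A0,G0,Y0)" "\<lambda>(A,G,Y). length G"] by auto
    obtain A G Y where AGYeq: "AGY = (A,G,Y)" by (cases AGY) auto
    have bp: "bp A G Y" using AGY AGYeq by simp
    have mini: "length G \<le> length G'" if "bp A' G' Y'" for A' G' Y'
      using minAGY[rule_format, of "(A',G',Y')"] that AGYeq by simp
    obtain j where j: "rotate j C = A @ G" using bp by (auto simp: bp_def)
    have Ane: "A \<noteq> []" and Yp: "is_path F Y" and YR: "set Y \<subseteq> R"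
      and e1: "(last A, hd Y) \<in> F" and e2: "(last Y, hd A) \<in> F" using bp by (auto simp: bp_def)
    have cycAG: "cyc F (A @ G)" using C j by (metis cyc_rotate)
    have setAG: "set (A @ G) = set C" using j by (metis set_rotate)
    have lenAG: "length (A @ G) = length C" using j by (metis length_rotate)
    have distAG: "distinct (A @ G)" using cycAG by (simp add: cyc_def)
    have Yne: "Y \<noteq> []" and distY: "distinct Y" and pY: "pedges Y \<subseteq> F" using Yp by (auto simp: is_path_iff)
    have YC: "set Y \<inter> set C = {}" using YR by (auto simp: R_def)
    have pAG: "pedges (A @ G) \<subseteq> F" using cycAG pedges_sub_cedges[of "A@G"] by (auto simp: cyc_def)
    have pA: "pedges A \<subseteq> F" using pAG pedges_take[of "length A" "A @ G"] by simp
    have pG: "pedges G \<subseteq> F" using pAG pedges_drop[of "length A" "A @ G"] by simp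
    have cycAY: "cyc F (A @ Y)"
    proof -
      have "2 \<le> length (A @ Y)" using Ane Yne by (cases A; cases Y) auto
      moreover have "distinct (A @ Y)" using distAG distY YC setAG by auto
      moreover have "cedges (A @ Y) \<subseteq> F"
        using cedges_eq[of "A @ Y"] pedges_append[OF Ane Yne] Ane Yne pA pY e1 e2 by auto
      ultimately show ?thesis by (simp add: cyc_def)
    qed
    have "length (A @ Y) \<le> length C" using lo cycAY by blast
    then have YG: "length Y \<le> length G" using lenAG by simp
    then have Gne: "G \<noteq> []" using Yne by auto
    obtain u where uG: "u \<in> set G" and unins: "\<not> ins F (A @ Y) u"
    proof (rule ccontr)
      assume "\<not> thesis"
      with that have allins: "\<forall>g\<in>set G. ins F (A @ Y) g" by blast
      have "distinct G" using distAG by simp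
      moreover have "set G \<inter> set (A @ Y) = {}" using distAG YC setAG by auto
      ultimately obtain c' where c': "cyc F c'" "set c' = set (A @ Y) \<union> set G"
        using multi_ins[OF cycAY _ pG _ allins] by blast
      have "length c' = card (set (A @ Y) \<union> set G)" using c' by (simp add: cyc_def distinct_card[symmetric])
      also have "\<dots> = card (set (A @ Y)) + card (set G)"
        using \<open>set G \<inter> set (A @ Y) = {}\<close> by (intro card_Un_disjoint) auto
      also have "\<dots> = length (A @ Y) + length G"
      proof -
        have "card (set (A @ Y)) = length (A @ Y)"
          by (rule distinct_card) (use cycAY in \<open>simp add: cyc_def\<close>)
        then show ?thesis using \<open>distinct G\<close> by (simp add: distinct_card)
      qed
      moreover have "1 \<le> length Y" using Yne by (cases Y) auto
      moreover have "length A + length G = length C" using lenAG by simp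
      ultimately have "length c' > length C" by (simp only: length_append)
      then show False using lo c'(1) by fastforce
    qed
    define y where "y = hd Y"
    have yY: "y \<in> set Y" using Yne by (simp add: y_def)
    have NA1: "(g, v) \<notin> F" if gG: "g \<in> set G" and vY: "v \<in> set Y" for g v
    proof
      assume gv: "(g,v) \<in> F"
      obtain G1 G2 where G12: "G = G1 @ g # G2" using split_list[OF gG] by blast
      obtain Y1 Y2 where Y12: "Y = Y1 @ v # Y2" using split_list[OF vY] by blast
      have dY: "v # Y2 = drop (length Y1) Y" using Y12 by simp
      have "is_path F (v # Y2)" unfolding dY by (rule is_path_drop[OF Yp]) (simp add: Y12)
      moreover have "set (v # Y2) \<subseteq> R" using YR Y12 by auto
      moreover have "rotate j C = (A @ G1 @ [g]) @ G2" using j G12 by simp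
      moreover have "last (v # Y2) = last Y" using Y12 by simp
      ultimately have "bp (A @ G1 @ [g]) G2 (v # Y2)" using gv e2 Ane unfolding bp_def by auto
      then have "length G \<le> length G2" by (rule mini)
      then show False using G12 by simp
    qed
    have rotg: "rotate (length (A @ G1) + j) C = (g # G2 @ A) @ G1" if "G = G1 @ g # G2" for G1 g G2
    proof -
      have "rotate (length (A @ G1) + j) C = rotate (length (A @ G1)) ((A @ G1) @ (g # G2))"
        using j that by (simp add: rotate_rotate[symmetric])
      also have "\<dots> = (g # G2) @ (A @ G1)" by (rule rotate_append)
      finally show ?thesis by simp
    qed
    have NA2: "(v, g) \<notin> F" if gG: "g \<in> set G" and vY: "v \<in> set Y" for g v
    proof
      assume vg: "(v,g) \<in> F"
      obtain G1 G2 where G12: "G = G1 @ g # G2" using split_list[OF gG] by blast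
      obtain Y1 Y2 where Y12: "Y = Y1 @ v # Y2" using split_list[OF vY] by blast
      have dY: "Y1 @ [v] = take (Suc (length Y1)) Y" using Y12 by simp
      have "is_path F (Y1 @ [v])" unfolding dY by (rule is_path_take[OF Yp]) simp
      moreover have "set (Y1 @ [v]) \<subseteq> R" using YR Y12 by auto
      moreover have "hd (Y1 @ [v]) = hd Y" using Y12 by (cases Y1) auto
      moreover have "last (g # G2 @ A) = last A" using Ane by simp
      ultimately have "bp (g # G2 @ A) G1 (Y1 @ [v])" using vg e1 rotg[OF G12] unfolding bp_def by auto
      then have "length G \<le> length G1" by (rule mini)
      then show False using G12 by simp
    qed
    have NA3: "\<not> ((y,wx) \<in> F \<and> (wx,g) \<in> F)" if gG: "g \<in> set G" and wR: "wx \<in> R" and wY: "wx \<notin> set Y" for g wx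
    proof
      assume a: "(y,wx) \<in> F \<and> (wx,g) \<in> F"
      obtain G1 G2 where G12: "G = G1 @ g # G2" using split_list[OF gG] by blast
      have "is_path F [y, wx]" using a yY wY by (auto simp: is_path_iff)
      moreover have "set [y, wx] \<subseteq> R" using YR yY wR by auto
      moreover have "last (g # G2 @ A) = last A" using Ane by simp
      ultimately have "bp (g # G2 @ A) G1 [y, wx]" using a e1 rotg[OF G12] unfolding bp_def y_def by auto
      then have "length G \<le> length G1" by (rule mini)
      then show False using G12 by simp
    qed
    have NA4: "\<not> ((g,wx) \<in> F \<and> (wx,y) \<in> F)" if gG: "g \<in> set G" and wR: "wx \<in> R" and wY: "wx \<notin> set Y" for g wx
    proof
      assume a: "(g,wx) \<in> F \<and> (wx,y) \<in> F"
      obtain G1 G2 where G12: "G = G1 @ g # G2" using split_list[OF gG] by blast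
      have "pedges (wx # Y) = insert (wx, y) (pedges Y)" using Yne by (simp add: pedges_Cons y_def)
      then have "is_path F (wx # Y)" using a pY distY wY by (auto simp: is_path_iff)
      moreover have "set (wx # Y) \<subseteq> R" using YR wR by auto
      moreover have "rotate j C = (A @ G1 @ [g]) @ G2" using j G12 by simp
      moreover have "last (wx # Y) = last Y" using Yne by simp
      ultimately have "bp (A @ G1 @ [g]) G2 (wx # Y)" using a e2 Ane unfolding bp_def by auto
      then have "length G \<le> length G2" by (rule mini)
      then show False using G12 by simp
    qed
    have yC: "y \<notin> set C" using YC yY by auto
    have ceC: "cedges (A @ G) = cedges C" using j by (metis cedges_rotate)
    have pAAG: "pedges A \<subseteq> pedges (A @ G)" using pedges_take[of "length A" "A @ G"] by simp
    have pAAY: "pedges A \<subseteq> pedges (A @ Y)" using pedges_take[of "length A" "A @ Y"] by simp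
    have ynoins: "\<not> ((a,y)\<in>F \<and> (y,b)\<in>F)" if ab: "(a,b) \<in> pedges A" for a b
    proof
      assume h: "(a,y)\<in>F \<and> (y,b)\<in>F"
      have "(a,b) \<in> cedges C" using ab pAAG pedges_sub_cedges[of "A @ G"] ceC by auto
      then have "ins F C y" using h unfolding ins_def by blast
      then show False using longest_noins[OF C lo yC] by simp
    qed
    have unoins: "\<not> ((a,u)\<in>F \<and> (u,b)\<in>F)" if ab: "(a,b) \<in> pedges A" for a b
    proof
      assume h: "(a,u)\<in>F \<and> (u,b)\<in>F"
      have "(a,b) \<in> cedges (A @ Y)" using ab pAAY pedges_sub_cedges[of "A @ Y"] by auto
      then have "ins F (A @ Y) u" using h unfolding ins_def by blast
      then show False using unins by simp
    qed
    have distA: "distinct A" using distAG by simp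
    have cA1: "card {v\<in>set A. (v,u)\<in>F} + card {v\<in>set A. (u,v)\<in>F} \<le> length A + 1"
      by (rule count_path2[OF distA]) (use unoins in blast)
    have cA2: "card {v\<in>set A. (v,y)\<in>F} + card {v\<in>set A. (y,v)\<in>F} \<le> length A + 1"
      by (rule count_path2[OF distA]) (use ynoins in blast)
    define f where "f v = (of_bool ((v,u)\<in>F) + of_bool ((u,v)\<in>F) + of_bool ((v,y)\<in>F) + of_bool ((y,v)\<in>F) :: nat)" for v
    have sumcard: "sum f S = card {v\<in>S. (v,u)\<in>F} + card {v\<in>S. (u,v)\<in>F} + card {v\<in>S. (v,y)\<in>F} + card {v\<in>S. (y,v)\<in>F}"
      if "finite S" for S
      using that by (simp add: f_def sum.distrib card_filter_sum)
    have total: "sum f V = indeg V F u + outdeg V F u + indeg V F y + outdeg V F y"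
      using sumcard[OF fin] by (simp add: indeg_def outdeg_def)
    have sA: "sum f (set A) \<le> 2 * length A + 2" using sumcard[of "set A"] cA1 cA2 by simp
    have uu: "(u,u) \<notin> F" "(y,y) \<notin> F" "(u,y) \<notin> F" "(y,u) \<notin> F"
      using nl NA1[OF uG yY] NA2[OF uG yY] by auto
    have sG: "sum f (set G) + 2 \<le> 2 * card (set G)"
    proof (rule sum_le_2_minus[OF _ uG])
      show "f u = 0" using uu by (simp add: f_def)
      fix v assume vG: "v \<in> set G"
      have "(v,y) \<notin> F" "(y,v) \<notin> F" using NA1[OF vG yY] NA2[OF vG yY] by auto
      then show "f v \<le> 2" by (simp add: f_def)
    qed simp
    have sY: "sum f (set Y) + 2 \<le> 2 * card (set Y)"
    proof (rule sum_le_2_minus[OF _ yY])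
      show "f y = 0" using uu by (simp add: f_def)
      fix v assume vY: "v \<in> set Y"
      have "(v,u) \<notin> F" "(u,v) \<notin> F" using NA1[OF uG vY] NA2[OF uG vY] by auto
      then show "f v \<le> 2" by (simp add: f_def)
    qed simp
    define Wr where "Wr = R - set Y"
    have finR: "finite R" using fin by (simp add: R_def)
    have sW: "sum f Wr \<le> 2 * card Wr"
    proof (rule sum_le_2)
      show "finite Wr" using finR by (simp add: Wr_def)
      fix wx assume wx: "wx \<in> Wr"
      have h3: "\<not> ((y,wx) \<in> F \<and> (wx,u) \<in> F)" using NA3[OF uG] wx by (auto simp: Wr_def)
      have h4: "\<not> ((u,wx) \<in> F \<and> (wx,y) \<in> F)" using NA4[OF uG] wx by (auto simp: Wr_def)
      show "f wx \<le> 2" unfolding f_def using h3 h4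
        by (cases "(wx,u)\<in>F"; cases "(u,wx)\<in>F"; cases "(wx,y)\<in>F"; cases "(y,wx)\<in>F") auto
    qed
    have VCR: "V = set C \<union> R" using CV by (auto simp: R_def)
    have RYW: "R = set Y \<union> Wr" using YR by (auto simp: Wr_def)
    have CAG: "set C = set A \<union> set G" using setAG by simp
    have dAG: "set A \<inter> set G = {}" using distAG by auto
    have sumV: "sum f V = sum f (set A) + sum f (set G) + sum f (set Y) + sum f Wr"
    proof -
      have "sum f V = sum f (set C) + sum f R"
        unfolding VCR by (rule sum.union_disjoint) (use finR in \<open>auto simp: R_def\<close>)
      moreover have "sum f (set C) = sum f (set A) + sum f (set G)"
        unfolding CAG by (rule sum.union_disjoint) (use dAG in auto)
      moreover have "sum f R = sum f (set Y) + sum f Wr"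
        unfolding RYW by (rule sum.union_disjoint) (use finR in \<open>auto simp: Wr_def\<close>)
      ultimately show ?thesis by simp
    qed
    have cardV: "card V = length A + card (set G) + card (set Y) + card Wr"
    proof -
      have "card V = card (set C) + card R"
        unfolding VCR by (rule card_Un_disjoint) (use finR in \<open>auto simp: R_def\<close>)
      moreover have "card (set C) = card (set A) + card (set G)"
        unfolding CAG by (rule card_Un_disjoint) (use dAG in auto)
      moreover have "card R = card (set Y) + card Wr"
        unfolding RYW by (rule card_Un_disjoint) (use finR in \<open>auto simp: Wr_def\<close>)
      moreover have "card (set A) = length A" using distA by (rule distinct_card)
      ultimately show ?thesis by simp
    qed
    have uV: "u \<in> V" using uG setAG CV by auto
    have yV: "y \<in> V" using yY YR by (auto simp: R_def)
    have "card V \<le> indeg V F u + outdeg V F u" using deg uV by blast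
    moreover have "card V \<le> indeg V F y + outdeg V F y" using deg yV by blast
    ultimately show False using total sumV sA sG sY sW cardV by linarith
  qed
qed

lemma pedges_not_hd: "distinct c \<Longrightarrow> (a,b) \<in> pedges c \<Longrightarrow> b \<noteq> hd c"
proof -
  assume d: "distinct c" and ab: "(a,b) \<in> pedges c"
  then obtain i where i: "Suc i < length c" "b = c!Suc i" unfolding in_pedges_iff by blast
  have cne: "c \<noteq> []"
  proof
    assume "c = []" with i(1) show False by simp
  qed
  have "hd c = c!0" by (rule hd_conv_nth[OF cne])
  moreover have l0: "0 < length c" using cne by simp
  moreover have "c!Suc i \<noteq> c!0" using nth_eq_iff_index_eq[OF d i(1) l0] by simp
  ultimately show ?thesis using i by simp
qed

lemma card_minus1: "finite S \<Longrightarrow> card S \<le> card (S - {y}) + 1"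
  by (cases "y \<in> S") (auto simp: card_Diff_singleton)

theorem ham_conn:
  fixes W :: "'a set" and F :: "('a \<times> 'a) set"
  assumes fin: "finite W" and F: "F \<subseteq> W \<times> W" and nl: "\<forall>x. (x,x) \<notin> F"
    and deg: "\<forall>a\<in>W. \<forall>b\<in>W. card W + 1 \<le> indeg W F a + outdeg W F b"
  shows "hamiltonian_connected W F"
  unfolding hamiltonian_connected_def
proof (intro ballI impI)
  fix x y assume x: "x \<in> W" and y: "y \<in> W" and xy: "x \<noteq> y"
  have inle: "indeg W F a + 1 \<le> card W" if "a \<in> W" for a
  proof -
    have "{c\<in>W. (c,a)\<in>F} \<subseteq> W - {a}" using nl by auto
    then have "card {c\<in>W. (c,a)\<in>F} \<le> card (W - {a})" using fin by (intro card_mono) auto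
    moreover have "card (W - {a}) = card W - 1" using that by (rule card_Diff_singleton)
    moreover have "1 \<le> card W" using that fin by (auto simp: Suc_le_eq card_gt_0_iff)
    ultimately show ?thesis unfolding indeg_def by linarith
  qed
  have outle: "outdeg W F a + 1 \<le> card W" if "a \<in> W" for a
  proof -
    have "{c\<in>W. (a,c)\<in>F} \<subseteq> W - {a}" using nl by auto
    then have "card {c\<in>W. (a,c)\<in>F} \<le> card (W - {a})" using fin by (intro card_mono) auto
    moreover have "card (W - {a}) = card W - 1" using that by (rule card_Diff_singleton)
    moreover have "1 \<le> card W" using that fin by (auto simp: Suc_le_eq card_gt_0_iff)
    ultimately show ?thesis unfolding outdeg_def by linarith
  qed
  have "card W + 1 \<le> indeg W F x + outdeg W F x" using deg x by blast
  then have three: "3 \<le> card W" using inle[OF x] outle[OF x] by linarith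
  define W' where "W' = W - {y}"
  define F' where "F' = {(a,b). a \<in> W' \<and> b \<in> W' \<and> a \<noteq> b \<and> (if b = x then (a,y) \<in> F else (a,b) \<in> F)}"
  have fin': "finite W'" using fin by (simp add: W'_def)
  have F': "F' \<subseteq> W' \<times> W'" by (auto simp: F'_def)
  have nl': "\<forall>z. (z,z) \<notin> F'" by (auto simp: F'_def)
  have cW': "card W' + 1 = card W"
  proof -
    have "card W' = card W - 1" unfolding W'_def using y by (rule card_Diff_singleton)
    moreover have "1 \<le> card W" using y fin by (auto simp: Suc_le_eq card_gt_0_iff)
    ultimately show ?thesis by linarith
  qed
  have xW': "x \<in> W'" using x xy by (simp add: W'_def)
  have in': "card {c\<in>W. (c, if a = x then y else a)\<in>F} \<le> indeg W' F' a + 1" if aW: "a \<in> W'" for a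
  proof (cases "a = x")
    case True
    have "{c\<in>W. (c,y)\<in>F} - {x} \<subseteq> {c\<in>W'. (c,a)\<in>F'}"
      using True xW' nl by (auto simp: W'_def F'_def)
    then have "card ({c\<in>W. (c,y)\<in>F} - {x}) \<le> indeg W' F' a"
      unfolding indeg_def using fin' by (intro card_mono) auto
    then show ?thesis using True card_minus1[of "{c\<in>W. (c,y)\<in>F}" x] fin by simp
  next
    case False
    have "{c\<in>W. (c,a)\<in>F} - {y} \<subseteq> {c\<in>W'. (c,a)\<in>F'}"
      using False aW nl by (auto simp: W'_def F'_def)
    then have "card ({c\<in>W. (c,a)\<in>F} - {y}) \<le> indeg W' F' a"
      unfolding indeg_def using fin' by (intro card_mono) auto
    then show ?thesis using False card_minus1[of "{c\<in>W. (c,a)\<in>F}" y] fin by simp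
  qed
  have out': "outdeg W F b \<le> outdeg W' F' b + 1" if bW: "b \<in> W'" for b
  proof (cases "b = x")
    case True
    have "{c\<in>W. (b,c)\<in>F} - {y} \<subseteq> {c\<in>W'. (b,c)\<in>F'}"
      using True nl x xy by (auto simp: W'_def F'_def)
    then have "card ({c\<in>W. (b,c)\<in>F} - {y}) \<le> outdeg W' F' b"
      unfolding outdeg_def using fin' by (intro card_mono) auto
    then show ?thesis using card_minus1[of "{c\<in>W. (b,c)\<in>F}" y] fin by (simp add: outdeg_def)
  next
    case False
    define g where "g c = (if c = y then x else c)" for c
    have "inj_on g ({c\<in>W. (b,c)\<in>F} - {x})" by (auto simp: inj_on_def g_def)
    moreover have "g ` ({c\<in>W. (b,c)\<in>F} - {x}) \<subseteq> {c\<in>W'. (b,c)\<in>F'}"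
      using False bW nl xW' by (auto simp: g_def W'_def F'_def)
    ultimately have "card ({c\<in>W. (b,c)\<in>F} - {x}) \<le> outdeg W' F' b"
      unfolding outdeg_def using fin' by (intro card_inj_on_le) auto
    then show ?thesis using card_minus1[of "{c\<in>W. (b,c)\<in>F}" x] fin by (simp add: outdeg_def)
  qed
  have deg': "\<forall>a\<in>W'. \<forall>b\<in>W'. card W' \<le> indeg W' F' a + outdeg W' F' b"
  proof (intro ballI)
    fix a b assume a: "a \<in> W'" and b: "b \<in> W'"
    have aW: "(if a = x then y else a) \<in> W" using a y by (auto simp: W'_def)
    have bW: "b \<in> W" using b by (simp add: W'_def)
    have "card W + 1 \<le> indeg W F (if a = x then y else a) + outdeg W F b" using deg aW bW by blast
    then show "card W' \<le> indeg W' F' a + outdeg W' F' b"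
      using in'[OF a] out'[OF b] cW' by (simp add: indeg_def)
  qed
  have two': "2 \<le> card W'" using cW' three by simp
  obtain c where c: "cyc F' c" "set c = W'" using ham_cycle[OF fin' F' nl' two' deg'] by blast
  obtain j where j: "hd (rotate j c) = x" using rot_to_hd[of x c] c xW' by blast
  define c1 where "c1 = rotate j c"
  have c1: "cyc F' c1" "set c1 = W'" "hd c1 = x" using c j by (auto simp: c1_def)
  have c1ne: "c1 \<noteq> []" and dc1: "distinct c1" and ce1: "cedges c1 \<subseteq> F'" using c1 by (auto simp: cyc_def)
  define p where "p = c1 @ [y]"
  have "pedges p = pedges c1 \<union> {(last c1, y)}" using pedges_append[OF c1ne, of "[y]"] by (simp add: p_def)
  moreover have "pedges c1 \<subseteq> F"
  proof
    fix e assume e: "e \<in> pedges c1"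
    obtain a b where ab: "e = (a,b)" by fastforce
    have "b \<noteq> x" using pedges_not_hd[OF dc1] e ab c1(3) by blast
    moreover have "(a,b) \<in> F'" using e ab ce1 pedges_sub_cedges[of c1] by auto
    ultimately show "e \<in> F" using ab by (auto simp: F'_def)
  qed
  moreover have "(last c1, y) \<in> F"
  proof -
    have "(last c1, hd c1) \<in> F'" using ce1 cedges_eq[OF c1ne] by auto
    then show ?thesis using c1(3) by (auto simp: F'_def)
  qed
  ultimately have "is_path F p" using dc1 c1(2) by (auto simp: is_path_iff p_def W'_def)
  moreover have "set p = W" using c1(2) y by (auto simp: p_def W'_def)
  moreover have "hd p = x" "last p = y" using c1ne c1(3) by (auto simp: p_def)
  ultimately show "\<exists>p. is_path F p \<and> set p = W \<and> hd p = x \<and> last p = y" by blast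
qed

lemma rot_rot_ex: "\<exists>t. rotate i xs = rotate t (rotate j xs)"
proof (cases "xs = []")
  case True then show ?thesis by simp
next
  case False
  define L where "L = length xs"
  have L0: "0 < L" using False by (simp add: L_def)
  define r where "r = j mod L"
  define q where "q = j div L"
  have rL: "r < L" using L0 by (simp add: r_def)
  have jeq: "j = L * q + r" by (simp add: r_def q_def)
  define s where "s = L - r"
  have Ls: "L = s + r" using rL by (simp add: s_def)
  have e: "s + i + j = i + L * (1 + q)" using jeq Ls by (simp add: algebra_simps)
  have "(s + i + j) mod L = i mod L" unfolding e by (rule mod_mult_self2)
  then have "rotate (s + i + j) xs = rotate i xs" by (metis L_def rotate_conv_mod)
  then show ?thesis by (metis rotate_rotate)
qed

lemma subseq_rot_app:
  assumes "subseq S (rotate t C0)" "C0 \<noteq> []"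
  shows "\<exists>t'. subseq S (rotate t' (C0 @ P))"
proof -
  define t0 where "t0 = t mod length C0"
  have t0: "t0 < length C0" using assms(2) by (simp add: t0_def)
  have r1: "rotate t C0 = drop t0 C0 @ take t0 C0" by (simp add: rotate_drop_take t0_def)
  have "rotate t0 (C0 @ P) = drop (t0 mod length (C0 @ P)) (C0 @ P) @ take (t0 mod length (C0 @ P)) (C0 @ P)"
    by (rule rotate_drop_take)
  also have "t0 mod length (C0 @ P) = t0" using t0 by simp
  also have "drop t0 (C0 @ P) = drop t0 C0 @ P" using t0 by simp
  also have "take t0 (C0 @ P) = take t0 C0" using t0 by simp
  finally have r2: "rotate t0 (C0 @ P) = drop t0 C0 @ P @ take t0 C0" by simp
  have "subseq (drop t0 C0 @ take t0 C0) (drop t0 C0 @ P @ take t0 C0)"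
    by (intro list_emb_append_mono list_emb_append2) auto
  then have "subseq S (rotate t0 (C0 @ P))" using assms(1) r1 r2 by (metis subseq_order.order_trans)
  then show ?thesis by blast
qed

lemma S_insert:
  assumes SC: "is_S_cycle E S C" and ab: "(a,b) \<in> cedges C" and P: "is_path E P"
    and dis: "set P \<inter> set C = {}" and e1: "(a, hd P) \<in> E" and e2: "(last P, b) \<in> E"
  shows "\<exists>C'. is_S_cycle E S C' \<and> length C' = length C + length P"
proof -
  have C: "cyc E C" using SC by (simp add: is_S_cycle_def is_cycle_iff)
  obtain i where i: "subseq S (rotate i C)" using SC by (auto simp: is_S_cycle_def)
  obtain j0 where j0: "last (rotate j0 C) = a" "hd (rotate j0 C) = b" using cedges_rot_to[OF ab] by blast
  define C0 where "C0 = rotate j0 C"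
  have C0: "cyc E C0" "set C0 = set C" "length C0 = length C" using C by (auto simp: C0_def)
  have C0ne: "C0 \<noteq> []" using C0 by (auto simp: cyc_def)
  have Pne: "P \<noteq> []" and dP: "distinct P" and pP: "pedges P \<subseteq> E" using P by (auto simp: is_path_iff)
  have pC0: "pedges C0 \<subseteq> E" using C0(1) pedges_sub_cedges[of C0] by (auto simp: cyc_def)
  have "cyc E (C0 @ P)"
  proof -
    have "2 \<le> length (C0 @ P)" using C0(1) by (auto simp: cyc_def)
    moreover have "distinct (C0 @ P)" using C0 dP dis by (auto simp: cyc_def)
    moreover have "cedges (C0 @ P) \<subseteq> E"
      using cedges_eq[of "C0 @ P"] pedges_append[OF C0ne Pne] C0ne Pne pP pC0 e1 e2 j0
      by (auto simp: C0_def)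
    ultimately show ?thesis by (simp add: cyc_def)
  qed
  moreover obtain t where "rotate i C = rotate t C0" using rot_rot_ex[of i C j0] by (auto simp: C0_def)
  then obtain t' where "subseq S (rotate t' (C0 @ P))" using subseq_rot_app[of S t C0 P] i C0ne by auto
  ultimately have "is_S_cycle E S (C0 @ P)" by (auto simp: is_S_cycle_def is_cycle_iff)
  moreover have "length (C0 @ P) = length C + length P" using C0 by simp
  ultimately show ?thesis by blast
qed

lemma indeg_induced: "u \<in> H \<Longrightarrow> indeg H (induced_edges E H) u = indeg H E u"
  unfolding indeg_def induced_edges_def by (rule arg_cong[where f=card]) auto
lemma outdeg_induced: "u \<in> H \<Longrightarrow> outdeg H (induced_edges E H) u = outdeg H E u"
  unfolding outdeg_def induced_edges_def by (rule arg_cong[where f=card]) auto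

lemma card_split_filter: "finite V \<Longrightarrow> A \<subseteq> V \<Longrightarrow>
  card {v\<in>V. P v} = card {v\<in>A. P v} + card {v\<in>V - A. P v}"
proof -
  assume a: "finite V" "A \<subseteq> V"
  have "{v\<in>V. P v} = {v\<in>A. P v} \<union> {v\<in>V - A. P v}" using a by auto
  moreover have "card ({v\<in>A. P v} \<union> {v\<in>V - A. P v}) = card {v\<in>A. P v} + card {v\<in>V - A. P v}"
    using a by (intro card_Un_disjoint) (auto intro: finite_subset)
  ultimately show ?thesis by simp
qed

lemma card_le_diff_plus: "finite B \<Longrightarrow> finite A \<Longrightarrow> card A \<le> card (A - B) + card B"
proof -
  assume "finite B" "finite A"
  have "card A \<le> card ((A - B) \<union> B)" using \<open>finite A\<close> \<open>finite B\<close> by (intro card_mono) auto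
  also have "\<dots> \<le> card (A - B) + card B" by (rule card_Un_le)
  finally show ?thesis .
qed

theorem lemma6:
  fixes V :: "'a set" and E :: "('a \<times> 'a) set" and S C :: "'a list" and k n :: nat
  assumes D: "digraph V E"
    and n: "n = card V"
    and k: "k = length S" "k \<ge> 3"
    and deg: "V \<noteq> {}" "int (min_semidegree V E) \<ge> \<lceil>real (n + k) / 2\<rceil> - 1"
    and S: "distinct S" "set S \<subseteq> V"
    and C: "is_S_cycle E S C"
    and longest: "\<forall>C'. is_S_cycle E S C' \<longrightarrow> length C' \<le> length C"
    and nonham: "set C \<noteq> V"
  shows "hamiltonian_connected (V - set C) (induced_edges E (V - set C))
       \<and> (\<forall>x \<in> V - set C. \<forall>y \<in> V - set C.
            indeg (V - set C) E x + outdeg (V - set C) E y \<ge> card (V - set C) + k - 2)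
       \<and> (\<forall>X. X \<subseteq> V - set C \<longrightarrow> card X \<le> 2 \<longrightarrow>
            strongly_connected (V - set C - X) (induced_edges E (V - set C - X)))
       \<and> k \<le> card (V - set C) \<and> card (V - set C) \<le> (n - k) div 2"
proof -
  have fin: "finite V" and Esub: "E \<subseteq> V \<times> V" and nl: "\<forall>x. (x,x) \<notin> E"
    using D by (auto simp: digraph_def)
  have Ccyc: "cyc E C" using C by (simp add: is_S_cycle_def is_cycle_iff)
  have CV: "set C \<subseteq> V" by (rule cyc_set_sub[OF Ccyc Esub])
  have distC: "distinct C" using Ccyc by (simp add: cyc_def)
  define H where "H = V - set C"
  have finH: "finite H" using fin by (simp add: H_def)
  have Hne: "H \<noteq> {}" using CV nonham by (auto simp: H_def)
  have HV: "H \<subseteq> V" by (auto simp: H_def)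
  have HC: "H \<inter> set C = {}" by (auto simp: H_def)
  have nCH: "n = length C + card H"
  proof -
    have "card (V - set C) = card V - card (set C)" using CV by (intro card_Diff_subset) auto
    moreover have "card (set C) \<le> card V" using CV fin by (intro card_mono)
    ultimately have "card V = card (set C) + card H" unfolding H_def by linarith
    then show ?thesis using n distC by (simp add: distinct_card)
  qed
  define d where "d = min_semidegree V E"
  have dle: "d \<le> indeg V E v" "d \<le> outdeg V E v" if "v \<in> V" for v
  proof -
    have "Min (outdeg V E ` V) \<le> outdeg V E v" using fin that by (intro Min_le) auto
    moreover have "Min (indeg V E ` V) \<le> indeg V E v" using fin that by (intro Min_le) auto
    ultimately show "d \<le> indeg V E v" "d \<le> outdeg V E v" by (auto simp: d_def min_semidegree_def)
  qed
  have d2: "n + k \<le> 2 * d + 2"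
  proof -
    have "real (n + k) / 2 \<le> of_int \<lceil>real (n + k) / 2\<rceil>" by (rule le_of_int_ceiling)
    also have "\<dots> \<le> of_int (int d + 1)" using deg(2) by (simp add: d_def)
    finally have "real (n + k) \<le> 2 * real d + 2" by simp
    then show ?thesis by linarith
  qed
  have insplit: "indeg V E x = card {v\<in>set C. (v,x)\<in>E} + indeg H E x" for x
    unfolding indeg_def H_def by (rule card_split_filter[OF fin CV])
  have outsplit: "outdeg V E x = card {v\<in>set C. (x,v)\<in>E} + outdeg H E x" for x
    unfolding outdeg_def H_def by (rule card_split_filter[OF fin CV])
  have CNT: "card {v\<in>set C. (v,x)\<in>E} + card {v\<in>set C. (y,v)\<in>E} \<le> length C"
    if P: "is_path E P" "set P \<subseteq> H" "hd P = x" "last P = y" for P x y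
  proof (rule count_cycle[OF distC], intro ballI, clarify)
    fix a b assume ab: "(a,b) \<in> cedges C" "(a,x) \<in> E" "(y,b) \<in> E"
    have "set P \<inter> set C = {}" using P(2) HC by auto
    then obtain C' where C': "is_S_cycle E S C'" "length C' = length C + length P"
      using S_insert[OF C ab(1) P(1)] ab P by auto
    have "P \<noteq> []" using P(1) by (simp add: is_path_iff)
    then show False using longest C' by fastforce
  qed
  have reach: "card H + k \<le> indeg H E u + outdeg H E v + 2"
    if uv: "u \<in> H" "v \<in> H" "(u,v) \<in> (induced_edges E H)\<^sup>*" for u v
  proof -
    obtain P where P: "is_path E P" "set P \<subseteq> H" "hd P = u" "last P = v"
      using rt_path[OF uv(3,1)] by blast
    have c: "card {w\<in>set C. (w,u)\<in>E} + card {w\<in>set C. (v,w)\<in>E} \<le> length C" by (rule CNT[OF P])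
    have "d \<le> indeg V E u" "d \<le> outdeg V E v" using dle uv HV by auto
    then show ?thesis using c insplit[of u] outsplit[of v] d2 nCH by linarith
  qed
  define F where "F = induced_edges E H"
  have Fsub: "F \<subseteq> H \<times> H" and nlF: "\<forall>x. (x,x) \<notin> F" using nl by (auto simp: F_def induced_edges_def)
  have strong: "\<forall>x\<in>H. \<forall>y\<in>H. (x,y) \<in> F\<^sup>*"
  proof (rule sc_lemma[OF finH Fsub nlF], intro ballI impI)
    fix u v assume uv: "u \<in> H" "v \<in> H" "(u,v) \<in> F\<^sup>*"
    have "card H + k \<le> indeg H E u + outdeg H E v + 2" using reach uv by (simp add: F_def)
    then show "card H \<le> indeg H F u + outdeg H F v + 1"
      using k(2) uv by (simp add: F_def indeg_induced outdeg_induced)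
  qed
  have allp: "card H + k \<le> indeg H E x + outdeg H E y + 2" if xy: "x \<in> H" "y \<in> H" for x y
  proof -
    have "(x,y) \<in> F\<^sup>*" using strong xy by blast
    then show ?thesis using reach[OF xy] by (simp add: F_def)
  qed
  have c1: "hamiltonian_connected H F"
  proof (rule ham_conn[OF finH Fsub nlF], intro ballI)
    fix a b assume ab: "a \<in> H" "b \<in> H"
    have "card H + k \<le> indeg H E a + outdeg H E b + 2" by (rule allp[OF ab])
    then show "card H + 1 \<le> indeg H F a + outdeg H F b"
      using k(2) ab by (simp add: F_def indeg_induced outdeg_induced)
  qed
  have c2: "\<forall>x\<in>H. \<forall>y\<in>H. card H + k - 2 \<le> indeg H E x + outdeg H E y"
  proof (intro ballI)
    fix x y assume "x \<in> H" "y \<in> H"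
    then have "card H + k \<le> indeg H E x + outdeg H E y + 2" by (rule allp)
    then show "card H + k - 2 \<le> indeg H E x + outdeg H E y" by linarith
  qed
  obtain x0 where x0: "x0 \<in> H" using Hne by blast
  have inH: "indeg H E x + 1 \<le> card H" if "x \<in> H" for x
  proof -
    have "{c\<in>H. (c,x)\<in>E} \<subseteq> H - {x}" using nl by auto
    then have "card {c\<in>H. (c,x)\<in>E} \<le> card (H - {x})" using finH by (intro card_mono) auto
    moreover have "card (H - {x}) = card H - 1" using that by (rule card_Diff_singleton)
    moreover have "1 \<le> card H" using that finH by (auto simp: Suc_le_eq card_gt_0_iff)
    ultimately show ?thesis unfolding indeg_def by linarith
  qed
  have outH: "outdeg H E x + 1 \<le> card H" if "x \<in> H" for x
  proof -
    have "{c\<in>H. (x,c)\<in>E} \<subseteq> H - {x}" using nl by auto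
    then have "card {c\<in>H. (x,c)\<in>E} \<le> card (H - {x})" using finH by (intro card_mono) auto
    moreover have "card (H - {x}) = card H - 1" using that by (rule card_Diff_singleton)
    moreover have "1 \<le> card H" using that finH by (auto simp: Suc_le_eq card_gt_0_iff)
    ultimately show ?thesis unfolding outdeg_def by linarith
  qed
  have c4: "k \<le> card H" using allp[OF x0 x0] inH[OF x0] outH[OF x0] by linarith
  have cd: "d + 1 \<le> length C"
  proof (rule ccontr)
    assume "\<not> d + 1 \<le> length C"
    then have cle: "length C \<le> d" by simp
    have Cne: "C \<noteq> []" using Ccyc by (auto simp: cyc_def)
    define a where "a = last C"
    define b where "b = hd C"
    have abC: "(a,b) \<in> cedges C" using cedges_eq[OF Cne] by (simp add: a_def b_def)
    have aC: "a \<in> set C" and bC: "b \<in> set C" using Cne by (auto simp: a_def b_def)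
    have aV: "a \<in> V" and bV: "b \<in> V" using aC bC CV by auto
    have oa: "card {v\<in>set C. (a,v)\<in>E} + 1 \<le> length C"
    proof -
      have "{v\<in>set C. (a,v)\<in>E} \<subseteq> set C - {a}" using nl by auto
      then have "card {v\<in>set C. (a,v)\<in>E} \<le> card (set C - {a})" by (intro card_mono) auto
      moreover have "card (set C - {a}) = card (set C) - 1" using aC by (rule card_Diff_singleton)
      moreover have "card (set C) = length C" using distC by (rule distinct_card)
      moreover have "1 \<le> card (set C)" using aC by (auto simp: Suc_le_eq card_gt_0_iff)
      ultimately show ?thesis by linarith
    qed
    have ib: "card {v\<in>set C. (v,b)\<in>E} + 1 \<le> length C"
    proof -
      have "{v\<in>set C. (v,b)\<in>E} \<subseteq> set C - {b}" using nl by auto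
      then have "card {v\<in>set C. (v,b)\<in>E} \<le> card (set C - {b})" by (intro card_mono) auto
      moreover have "card (set C - {b}) = card (set C) - 1" using bC by (rule card_Diff_singleton)
      moreover have "card (set C) = length C" using distC by (rule distinct_card)
      moreover have "1 \<le> card (set C)" using bC by (auto simp: Suc_le_eq card_gt_0_iff)
      ultimately show ?thesis by linarith
    qed
    have "1 \<le> outdeg H E a" using dle(2)[OF aV] outsplit[of a] oa cle by linarith
    then have "{z\<in>H. (a,z)\<in>E} \<noteq> {}" unfolding outdeg_def by (intro notI) simp
    then obtain w where w: "w \<in> H" "(a,w) \<in> E" by blast
    have "1 \<le> indeg H E b" using dle(1)[OF bV] insplit[of b] ib cle by linarith
    then have "{z\<in>H. (z,b)\<in>E} \<noteq> {}" unfolding indeg_def by (intro notI) simp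
    then obtain w' where w': "w' \<in> H" "(w',b) \<in> E" by blast
    obtain P where P: "is_path E P" "set P \<subseteq> H" "hd P = w" "last P = w'"
      using rt_path[of w w' E H] strong w w' by (auto simp: F_def)
    have "set P \<inter> set C = {}" using P(2) HC by auto
    then obtain C' where C': "is_S_cycle E S C'" "length C' = length C + length P"
      using S_insert[OF C abC P(1)] w w' P by auto
    have "P \<noteq> []" using P(1) by (simp add: is_path_iff)
    then show False using longest C' by fastforce
  qed
  have c5: "card H \<le> (n - k) div 2" using cd d2 nCH by linarith
  have c3: "strongly_connected (H - X) (induced_edges E (H - X))" if X: "X \<subseteq> H" "card X \<le> 2" for X
    unfolding strongly_connected_def
  proof (intro ballI)
    fix x y assume x: "x \<in> H - X" and y: "y \<in> H - X"
    show "\<exists>p. is_path (induced_edges E (H - X)) p \<and> set p \<subseteq> H - X \<and> hd p = x \<and> last p = y"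
    proof (cases "x = y")
      case True
      then show ?thesis using x by (intro exI[of _ "[x]"]) (auto simp: is_path_iff)
    next
      case xy: False
      show ?thesis
      proof (cases "(x,y) \<in> E")
        case True
        have "is_path (induced_edges E (H - X)) [x,y]" using True xy x y
          by (auto simp: is_path_iff induced_edges_def)
        then show ?thesis using x y by (intro exI[of _ "[x,y]"]) auto
      next
        case False
        define H' where "H' = H - X"
        define Ox where "Ox = {z\<in>H'. (x,z)\<in>E}"
        define Iy where "Iy = {z\<in>H'. (z,y)\<in>E}"
        have finX: "finite X" using X finH by (meson finite_subset)
        have finH': "finite H'" using finH by (simp add: H'_def)
        have o1: "outdeg H E x \<le> card Ox + card X"
        proof -
          have "outdeg H E x \<le> card ({z\<in>H. (x,z)\<in>E} - X) + card X"
            unfolding outdeg_def using finX finH by (intro card_le_diff_plus) auto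
          moreover have "{z\<in>H. (x,z)\<in>E} - X = Ox" by (auto simp: Ox_def H'_def)
          ultimately show ?thesis by simp
        qed
        have i1: "indeg H E y \<le> card Iy + card X"
        proof -
          have "indeg H E y \<le> card ({z\<in>H. (z,y)\<in>E} - X) + card X"
            unfolding indeg_def using finX finH by (intro card_le_diff_plus) auto
          moreover have "{z\<in>H. (z,y)\<in>E} - X = Iy" by (auto simp: Iy_def H'_def)
          ultimately show ?thesis by simp
        qed
        have xH: "x \<in> H" and yH: "y \<in> H" using x y by auto
        have ap: "card H + k \<le> indeg H E y + outdeg H E x + 2" by (rule allp[OF yH xH])
        have cH': "card H' + card X = card H"
        proof -
          have "card (H - X) = card H - card X" using X(1) finX by (intro card_Diff_subset)
          moreover have "card X \<le> card H" using X(1) finH by (intro card_mono)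
          ultimately show ?thesis unfolding H'_def by linarith
        qed
        have sub: "Ox \<union> Iy \<subseteq> H' - {x,y}" using nl False by (auto simp: Ox_def Iy_def)
        have cH'2: "card (H' - {x,y}) + 2 = card H'"
        proof -
          have "{x,y} \<subseteq> H'" using x y by (auto simp: H'_def)
          then have "card (H' - {x,y}) = card H' - card {x,y}" using finH' by (intro card_Diff_subset) auto
          moreover have "card {x,y} = 2" using xy by simp
          moreover have "card {x,y} \<le> card H'" using \<open>{x,y} \<subseteq> H'\<close> finH' by (intro card_mono) auto
          ultimately show ?thesis by linarith
        qed
        have "Ox \<inter> Iy \<noteq> {}"
        proof
          assume e: "Ox \<inter> Iy = {}"
          have "card (Ox \<union> Iy) = card Ox + card Iy" using e finH' by (intro card_Un_disjoint) (auto simp: Ox_def Iy_def)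
          moreover have "card (Ox \<union> Iy) \<le> card (H' - {x,y})" using sub finH' by (intro card_mono) auto
          ultimately show False using o1 i1 ap cH' cH'2 X(2) k(2) by linarith
        qed
        then obtain z where z: "z \<in> H'" "(x,z)\<in>E" "(z,y)\<in>E" by (auto simp: Ox_def Iy_def)
        have "z \<noteq> x" "z \<noteq> y" using z nl by auto
        then have "is_path (induced_edges E (H - X)) [x,z,y]" using z x y xy
          by (auto simp: is_path_iff induced_edges_def H'_def)
        moreover have "set [x,z,y] \<subseteq> H - X" using x y z by (auto simp: H'_def)
        ultimately show ?thesis by (intro exI[of _ "[x,z,y]"]) auto
      qed
    qed
  qed
  show ?thesis using c1 c2 c3 c4 c5 unfolding F_def H_def by blast
qed

end
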